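(* Consider M-FACTORING, and let $n\geqslant 2$, where each option is a non-trivial disjunctive sum of a factoring of $n$. Then $\mathcal{SG}(n)=\Omega(n)-1$. If no two distinct components may contain the same prime number, then $\mathcal{SG}(n)=\omega(n)-1$.
   Context: M-FACTORING is the impartial normal-play heap game where a move from a heap $n$ replaces it by the disjunctive sum $a_1+\cdots+a_k$ of a factorization $n=a_1a_2\cdots a_k$ with $k\ge2$ and $1<a_1\le\cdots\le a_k$. $\mathcal{SG}$ denotes the Sprague-Grundy value (mex rule, nim-sum). $\Omega(n)$ counts prime factors with multiplicity, $\omega(n)$ counts distinct prime factors. *)

theory Defs
  imports "HOL-Computational_Algebra.Primes"
begin

definition mex :: "nat set \<Rightarrow> nat" where
  "mex S = (LEAST m. m \<notin> S)"

definition nim_sum :: "nat list \<Rightarrow> nat" where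
  "nim_sum xs = foldr (\<lambda>x y. Bit_Operations.xor x y) xs 0"

definition factoring_option :: "(nat list \<Rightarrow> bool) \<Rightarrow> nat \<Rightarrow> nat list \<Rightarrow> bool" where
  "factoring_option ok n as \<longleftrightarrow>
     length as \<ge> 2 \<and> sorted as \<and> (\<forall>a\<in>set as. a > 1) \<and> prod_list as = n \<and> ok as"

text \<open>Sprague-Grundy function of the factoring game with side condition ok,
  defined by well-founded recursion (every component is strictly smaller than n).\<close>
definition SG_fact :: "(nat list \<Rightarrow> bool) \<Rightarrow> nat \<Rightarrow> nat" where
  "SG_fact ok = wfrec less_than
     (\<lambda>g n. mex {nim_sum (map g as) | as. factoring_option ok n as})"

definition SG_M :: "nat \<Rightarrow> nat" where
  "SG_M = SG_fact (\<lambda>_. True)"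

definition SG_M_coprime :: "nat \<Rightarrow> nat" where
  "SG_M_coprime = SG_fact (\<lambda>as. \<forall>i j. i < j \<and> j < length as \<longrightarrow> coprime (as ! i) (as ! j))"

definition bigOmega :: "nat \<Rightarrow> nat" where
  "bigOmega n = size (prime_factorization n)"

definition smallomega :: "nat \<Rightarrow> nat" where
  "smallomega n = card (prime_factors n)"

end

theory Submission
  imports Defs "HOL-Library.Multiset"
begin

lemma xor_le_add: "Bit_Operations.xor (x::nat) y \<le> x + y"
proof (induction x arbitrary: y rule: less_induct)
  case (less x)
  show ?case
  proof (cases "x = 0")
    case True then show ?thesis by simp
  next
    case False
    have "x div 2 < x" using False by simp
    hence IH: "Bit_Operations.xor (x div 2) (y div 2) \<le> x div 2 + y div 2" using less by blast
    have "Bit_Operations.xor x y = of_bool (odd x \<noteq> odd y) + 2 * Bit_Operations.xor (x div 2) (y div 2)"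
      by (rule xor_nat_rec)
    also have "\<dots> \<le> x mod 2 + y mod 2 + 2 * (x div 2 + y div 2)"
    proof -
      have "of_bool (odd x \<noteq> odd y) \<le> x mod 2 + y mod 2" by (auto simp: odd_iff_mod_2_eq_one)
      then show ?thesis by (rule add_mono) (use IH in simp)
    qed
    also have "\<dots> = x + y" by simp
    finally show ?thesis .
  qed
qed

lemma nim_sum_Nil[simp]: "nim_sum [] = 0" by (simp add: nim_sum_def)
lemma nim_sum_Cons[simp]: "nim_sum (x # xs) = Bit_Operations.xor x (nim_sum xs)"
  by (simp add: nim_sum_def)

lemma nim_sum_le: "nim_sum xs \<le> sum_list xs"
proof (induction xs)
  case (Cons x xs)
  then show ?case using xor_le_add[of x "nim_sum xs"] by simp
qed simp

lemma nim_sum_append: "nim_sum (xs @ ys) = Bit_Operations.xor (nim_sum xs) (nim_sum ys)"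
  by (induction xs) (simp_all add: xor.assoc)

lemma nim_sum_mset: "mset xs = mset ys \<Longrightarrow> nim_sum xs = nim_sum ys"
proof (induction xs arbitrary: ys)
  case Nil then show ?case by simp
next
  case (Cons x xs)
  then have "x \<in> set ys" by (metis list.set_intros(1) set_mset_mset)
  then obtain us vs where ys: "ys = us @ x # vs" by (meson split_list)
  with Cons.prems have "mset xs = mset (us @ vs)" by simp
  with Cons.IH have "nim_sum xs = nim_sum (us @ vs)" by blast
  then show ?case using ys by (simp add: nim_sum_append xor.left_commute)
qed

lemma nim_sum_zeros: "(\<forall>x\<in>set xs. x = 0) \<Longrightarrow> nim_sum xs = 0"
  by (induction xs) auto

lemma prod_list_ge: "(\<forall>x\<in>set xs. (x::nat) > 1) \<Longrightarrow> prod_list xs \<ge> 2 ^ length xs"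
proof (induction xs)
  case (Cons x xs)
  then have "2 * 2 ^ length xs \<le> x * prod_list xs"
    by (intro mult_le_mono) auto
  then show ?case by simp
qed simp

lemma factoring_option_less:
  assumes "factoring_option ok n as" "a \<in> set as"
  shows "a < n"
proof -
  have len: "length as \<ge> 2" and gt: "\<forall>x\<in>set as. x > 1" and pr: "prod_list as = n"
    using assms(1) unfolding factoring_option_def by auto
  have pr2: "prod_list as = a * prod_list (remove1 a as)"
    using assms(2) by (metis mset_remove1 prod_mset.remove prod_mset_prod_list set_mset_mset)
  moreover have "length (remove1 a as) \<ge> 1" using len assms(2) by (simp add: length_remove1)
  moreover have "\<forall>x\<in>set (remove1 a as). x > 1" using gt by (meson notin_set_remove1)
  ultimately have "prod_list (remove1 a as) \<ge> 2"
    using prod_list_ge[of "remove1 a as"]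
    by (metis order_trans power_increasing_iff one_less_numeral_iff semiring_norm(76) power_one_right)
  moreover have "a > 0" using gt assms(2) by auto
  ultimately show ?thesis using pr pr2 by (metis less_le_trans mult_less_mono2 nat_mult_1_right one_less_numeral_iff semiring_norm(76) le_less)
qed

lemma SG_fact_eq:
  "SG_fact ok n = mex {nim_sum (map (SG_fact ok) as) | as. factoring_option ok n as}"
proof -
  have "SG_fact ok n = mex {nim_sum (map (cut (SG_fact ok) less_than n) as) | as. factoring_option ok n as}"
    unfolding SG_fact_def by (subst wfrec) simp_all
  also have "{nim_sum (map (cut (SG_fact ok) less_than n) as) | as. factoring_option ok n as}
      = {nim_sum (map (SG_fact ok) as) | as. factoring_option ok n as}"
  proof -
    have "map (cut (SG_fact ok) less_than n) as = map (SG_fact ok) as" if "factoring_option ok n as" for as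
      using factoring_option_less[OF that] by (intro map_cong) (auto intro: cut_apply)
    then show ?thesis by (intro Collect_cong) metis
  qed
  finally show ?thesis .
qed

lemma mex_eqI: "(\<forall>v\<in>S. v < m) \<Longrightarrow> (\<forall>v<m. v \<in> S) \<Longrightarrow> mex S = m"
  unfolding mex_def by (rule Least_equality) (auto, meson leI)

lemma sum_minus_one: "(\<forall>a\<in>set as. f a \<ge> (1::nat)) \<Longrightarrow>
   sum_list (map (\<lambda>a. f a - 1) as) + length as = sum_list (map f as)"
  by (induction as) auto


section \<open>Omega\<close>

lemma bigOmega_mult: "(a::nat) \<noteq> 0 \<Longrightarrow> b \<noteq> 0 \<Longrightarrow> bigOmega (a * b) = bigOmega a + bigOmega b"
  by (simp add: bigOmega_def prime_factorization_mult)

lemma bigOmega_prod_list: "0 \<notin> set as \<Longrightarrow> bigOmega (prod_list (as::nat list)) = sum_list (map bigOmega as)"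
  proof (induction as)
  case Nil show ?case by (simp add: bigOmega_def)
next
  case (Cons a as)
  then have "a \<noteq> 0" "prod_list as \<noteq> 0" by (auto simp: prod_list_zero_iff)
  then show ?case using Cons by (simp add: bigOmega_mult)
qed

lemma bigOmega_pos: "(a::nat) > 1 \<Longrightarrow> bigOmega a \<ge> 1"
  unfolding bigOmega_def using prime_factorization_empty_iff[of a]
  by (auto simp: Suc_le_eq nonempty_has_size)

lemma bigOmega_primes: "\<forall>p\<in>set ps. prime p \<Longrightarrow> bigOmega (prod_list (ps::nat list)) = length ps"
  unfolding bigOmega_def using prime_factorization_prod_mset_primes[of "mset ps"]
  by (simp add: prod_mset_prod_list)

lemma SG_M_eq: "SG_M n = bigOmega n - 1"
proof (induction n rule: less_induct)
  case (less n)
  define S where "S = {nim_sum (map SG_M as) | as. factoring_option (\<lambda>_. True) n as}"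
  have SG: "SG_M n = mex S" unfolding S_def SG_M_def by (rule SG_fact_eq)
  have mapeq: "map SG_M as = map (\<lambda>a. bigOmega a - 1) as" if "factoring_option (\<lambda>_. True) n as" for as
    using less factoring_option_less[OF that] by auto
  have up: "\<forall>v\<in>S. v < bigOmega n - 1"
  proof
    fix v assume "v \<in> S"
    then obtain as where opt: "factoring_option (\<lambda>_. True) n as" and v: "v = nim_sum (map SG_M as)"
      unfolding S_def by blast
    from opt have len: "length as \<ge> 2" and gt: "\<forall>a\<in>set as. a > 1" and pr: "prod_list as = n"
      unfolding factoring_option_def by auto
    have pos: "\<forall>a\<in>set as. bigOmega a \<ge> 1" using gt bigOmega_pos by blast
    have "bigOmega n = sum_list (map bigOmega as)"
      using pr gt bigOmega_prod_list[of as] by fastforce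
    also have "\<dots> = sum_list (map (\<lambda>a. bigOmega a - 1) as) + length as"
      using sum_minus_one[OF pos] by simp
    finally have eq: "bigOmega n = sum_list (map (\<lambda>a. bigOmega a - 1) as) + length as" .
    have "v \<le> sum_list (map (\<lambda>a. bigOmega a - 1) as)"
      using v mapeq[OF opt] nim_sum_le by metis
    then show "v < bigOmega n - 1" using eq len by linarith
  qed
  have low: "\<forall>t < bigOmega n - 1. t \<in> S"
  proof (intro allI impI)
    fix t assume t: "t < bigOmega n - 1"
    have "n \<noteq> 0" by (rule ccontr) (use t in \<open>simp add: bigOmega_def\<close>)
    obtain ps where ps: "mset ps = prime_factorization n" using ex_mset by blast
    have lenps: "length ps = bigOmega n" unfolding bigOmega_def using ps by (metis size_mset)
    have primes: "\<forall>p\<in>set ps. prime p" using ps by (metis in_prime_factors_imp_prime set_mset_mset)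
    have prodps: "prod_list ps = n"
    proof -
      have "prod_list ps = prod_mset (mset ps)" by (simp add: prod_mset_prod_list)
      also have "\<dots> = normalize n" unfolding ps using \<open>n \<noteq> 0\<close> by (rule prod_mset_prime_factorization)
      finally show ?thesis by simp
    qed
    define a where "a = prod_list (take (t+1) ps)"
    define rs where "rs = drop (t+1) ps"
    define as where "as = sort (a # rs)"
    have ma: "mset as = mset (a # rs)" unfolding as_def by simp
    have sa: "set as = set (a # rs)" unfolding as_def by (rule set_sort)
    have lenrs: "length rs \<ge> 1" using t lenps unfolding rs_def by simp
    have Oa: "bigOmega a = t + 1" unfolding a_def using primes t lenps
      by (subst bigOmega_primes) (auto dest: in_set_takeD)
    have "a \<noteq> 0" unfolding a_def using primes by (auto simp: prod_list_zero_iff) (metis in_set_takeD not_prime_0)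
    moreover have "a \<noteq> 1" using Oa by (auto simp: bigOmega_def)
    ultimately have agt: "a > 1" by simp
    have rsp: "\<forall>r\<in>set rs. prime r" using primes unfolding rs_def by (auto dest: in_set_dropD)
    have opt: "factoring_option (\<lambda>_. True) n as"
      unfolding factoring_option_def
    proof (intro conjI)
      show "length as \<ge> 2" using lenrs unfolding as_def by simp
      show "sorted as" unfolding as_def by (rule sorted_sort)
      show "\<forall>x\<in>set as. 1 < x" using agt rsp prime_gt_1_nat unfolding sa by auto
      have "prod_list as = prod_list (a # rs)" using ma by (metis prod_mset_prod_list)
      also have "\<dots> = prod_list ps" unfolding a_def rs_def
        by (metis append_take_drop_id prod_list.Cons prod_list.append)
      finally show "prod_list as = n" using prodps by simp
    qed simp
    have "nim_sum (map SG_M as) = nim_sum (map SG_M (a # rs))"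
      by (rule nim_sum_mset) (simp add: ma)
    also have "\<dots> = Bit_Operations.xor (SG_M a) (nim_sum (map SG_M rs))" by simp
    also have "SG_M a = t"
      using less[of a] factoring_option_less[OF opt, of a] Oa unfolding sa by simp
    also have "nim_sum (map SG_M rs) = 0"
    proof (rule nim_sum_zeros)
      show "\<forall>x\<in>set (map SG_M rs). x = 0"
      proof
        fix x assume "x \<in> set (map SG_M rs)"
        then obtain r where r: "r \<in> set rs" "x = SG_M r" by auto
        have "r < n" using factoring_option_less[OF opt, of r] r unfolding sa by simp
        then show "x = 0" using less[of r] r rsp
          by (simp add: bigOmega_def prime_factorization_prime)
      qed
    qed
    finally have "nim_sum (map SG_M as) = t" by simp
    then show "t \<in> S" unfolding S_def using opt by blast
  qed
  show ?case unfolding SG by (rule mex_eqI[OF up low])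
qed


section \<open>omega\<close>

definition pc :: "nat list \<Rightarrow> bool" where
  "pc as \<longleftrightarrow> (\<forall>i j. i < j \<and> j < length as \<longrightarrow> coprime (as ! i) (as ! j))"

lemma SG_M_coprime_alt: "SG_M_coprime = SG_fact pc"
  unfolding SG_M_coprime_def pc_def[abs_def] by (rule refl)

lemma pc_Cons: "pc (x # xs) \<longleftrightarrow> (\<forall>y\<in>set xs. coprime x y) \<and> pc xs"
proof
  assume H: "pc (x # xs)"
  have "coprime x y" if y: "y \<in> set xs" for y
  proof -
    obtain j where "j < length xs" "xs ! j = y" using y by (meson in_set_conv_nth)
    then show ?thesis using H[unfolded pc_def, rule_format, of 0 "Suc j"] by simp
  qed
  moreover have "pc xs" unfolding pc_def
  proof (intro allI impI)
    fix i j assume "i < j \<and> j < length xs"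
    then show "coprime (xs ! i) (xs ! j)" using H[unfolded pc_def, rule_format, of "Suc i" "Suc j"] by simp
  qed
  ultimately show "(\<forall>y\<in>set xs. coprime x y) \<and> pc xs" by blast
next
  assume H: "(\<forall>y\<in>set xs. coprime x y) \<and> pc xs"
  show "pc (x # xs)" unfolding pc_def
  proof (intro allI impI)
    fix i j assume ij: "i < j \<and> j < length (x # xs)"
    then obtain j' where j': "j = Suc j'" by (cases j) auto
    show "coprime ((x # xs) ! i) ((x # xs) ! j)"
    proof (cases i)
      case 0
      have "xs ! j' \<in> set xs" using ij j' by (simp add: nth_mem)
      then show ?thesis using H 0 j' by simp
    next
      case (Suc i')
      have "coprime (xs ! i') (xs ! j')"
        using H[THEN conjunct2, unfolded pc_def, rule_format, of i' j'] ij j' Suc by simp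
      then show ?thesis using Suc j' by simp
    qed
  qed
qed

lemma pc_iff:
  assumes "\<forall>x\<in>set xs. x > 1"
  shows "pc xs \<longleftrightarrow> distinct xs \<and> (\<forall>x\<in>set xs. \<forall>y\<in>set xs. x \<noteq> y \<longrightarrow> coprime x y)"
proof
  assume H: "pc xs"
  have cp: "coprime (xs ! i) (xs ! j)" if "i < length xs" "j < length xs" "i \<noteq> j" for i j
  proof (cases "i < j")
    case True then show ?thesis using H[unfolded pc_def, rule_format, of i j] that by blast
  next
    case False then have "j < i" using that by simp
    then show ?thesis using H[unfolded pc_def, rule_format, of j i] that by (simp add: coprime_commute)
  qed
  have "distinct xs" unfolding distinct_conv_nth
  proof (intro allI impI)
    fix i j assume "i < length xs" "j < length xs" "i \<noteq> j"
    then have c: "coprime (xs ! i) (xs ! j)" by (rule cp)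
    have "xs ! i > 1" using assms \<open>i < length xs\<close> by (simp add: nth_mem)
    then show "xs ! i \<noteq> xs ! j" using c by auto
  qed
  moreover have "\<forall>x\<in>set xs. \<forall>y\<in>set xs. x \<noteq> y \<longrightarrow> coprime x y"
    by (auto simp: in_set_conv_nth intro: cp)
  ultimately show "distinct xs \<and> (\<forall>x\<in>set xs. \<forall>y\<in>set xs. x \<noteq> y \<longrightarrow> coprime x y)" by blast
next
  assume H: "distinct xs \<and> (\<forall>x\<in>set xs. \<forall>y\<in>set xs. x \<noteq> y \<longrightarrow> coprime x y)"
  show "pc xs" unfolding pc_def
  proof (intro allI impI)
    fix i j assume ij: "i < j \<and> j < length xs"
    then have "xs ! i \<noteq> xs ! j" using H by (simp add: nth_eq_iff_index_eq)
    then show "coprime (xs ! i) (xs ! j)" using H ij by (simp add: nth_mem)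
  qed
qed

lemma pc_map:
  assumes "distinct rs" "\<forall>x\<in>set rs. \<forall>y\<in>set rs. x \<noteq> y \<longrightarrow> coprime (f x) (f y)"
  shows "pc (map f rs)"
  unfolding pc_def
proof (intro allI impI)
  fix i j assume ij: "i < j \<and> j < length (map f rs)"
  then have "rs ! i \<noteq> rs ! j" using assms(1) by (simp add: nth_eq_iff_index_eq)
  then show "coprime (map f rs ! i) (map f rs ! j)" using assms(2) ij by (simp add: nth_mem)
qed

lemma smallomega_mult:
  assumes "(a::nat) \<noteq> 0" "b \<noteq> 0" "coprime a b"
  shows "smallomega (a * b) = smallomega a + smallomega b"
proof -
  have "prime_factors a \<inter> prime_factors b = {}"
  proof (rule ccontr)
    assume "prime_factors a \<inter> prime_factors b \<noteq> {}"
    then obtain p where "p \<in> prime_factors a" "p \<in> prime_factors b" by blast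
    then have "prime p" "p dvd a" "p dvd b" by (auto simp: in_prime_factors_iff)
    then show False using assms(3) coprime_common_divisor not_prime_unit by blast
  qed
  then show ?thesis unfolding smallomega_def using assms
    by (simp add: prime_factors_product card_Un_disjoint)
qed

lemma smallomega_prod_list: "pc as \<Longrightarrow> 0 \<notin> set as \<Longrightarrow> smallomega (prod_list as) = sum_list (map smallomega as)"
proof (induction as)
  case Nil show ?case by (simp add: smallomega_def)
next
  case (Cons a as)
  then have "a \<noteq> 0" "prod_list as \<noteq> 0" by (auto simp: prod_list_zero_iff)
  moreover have "coprime a (prod_list as)" using Cons.prems(1) unfolding pc_Cons
    by (auto intro: prod_list_coprime_right)
  moreover have "pc as" using Cons.prems(1) unfolding pc_Cons by blast
  ultimately show ?case using Cons by (simp add: smallomega_mult)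
qed

lemma smallomega_pos: "(a::nat) > 1 \<Longrightarrow> smallomega a \<ge> 1"
  unfolding smallomega_def using prime_factorization_empty_iff[of a]
  by (auto simp: Suc_le_eq card_gt_0_iff)

definition ppart :: "nat \<Rightarrow> nat set \<Rightarrow> nat" where
  "ppart n B = (\<Prod>q\<in>B. q ^ multiplicity q n)"

lemma ppart_nz: "B \<subseteq> prime_factors n \<Longrightarrow> ppart n B \<noteq> 0"
  unfolding ppart_def by (subst prod_zero_iff) (auto simp: in_prime_factors_iff dest: finite_subset)

lemma ppart_pf:
  assumes B: "B \<subseteq> prime_factors n"
  shows "prime_factors (ppart n B) = B"
proof -
  have fin: "finite B" by (rule finite_subset[OF B]) simp
  have nz: "ppart n B \<noteq> 0" by (rule ppart_nz[OF B])
  have 1: "p \<in> B" if pp: "p \<in> prime_factors (ppart n B)" for p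
  proof -
    have p1: "prime p" using pp by (simp add: in_prime_factors_iff)
    have p2: "p dvd prod (\<lambda>q. q ^ multiplicity q n) B" using pp by (simp add: in_prime_factors_iff ppart_def)
    obtain q where q1: "q \<in> B" and q2: "p dvd q ^ multiplicity q n"
      using iffD1[OF prime_dvd_prod_iff[OF fin p1] p2] by blast
    have "p dvd q" by (rule prime_dvd_power[OF p1 q2])
    moreover have "prime q" using B q1 by (meson in_prime_factors_imp_prime subsetD)
    ultimately have "p = q" using p1 primes_dvd_imp_eq by blast
    then show "p \<in> B" using q1 by simp
  qed
  have 2: "p \<in> prime_factors (ppart n B)" if p: "p \<in> B" for p
  proof -
    have pn: "p \<in> prime_factors n" using B p by (rule subsetD)
    then have pr: "prime p" and m: "multiplicity p n > 0" by (simp_all add: prime_factors_multiplicity)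
    from m have "p dvd p ^ multiplicity p n" by (simp add: dvd_power)
    also have "\<dots> dvd ppart n B" unfolding ppart_def by (rule dvd_prodI[OF fin p])
    finally have "p dvd ppart n B" .
    then show ?thesis using nz pr by (simp add: in_prime_factors_iff)
  qed
  from 1 2 show ?thesis by blast
qed

lemma smallomega_ppart: assumes "B \<subseteq> prime_factors n" shows "smallomega (ppart n B) = card B"
  unfolding smallomega_def ppart_pf[OF assms] by (rule refl)

lemma ppart_gt1: "B \<subseteq> prime_factors n \<Longrightarrow> B \<noteq> {} \<Longrightarrow> ppart n B > 1"
proof -
  assume a1: "B \<subseteq> prime_factors n" and a2: "B \<noteq> {}"
  have "ppart n B \<noteq> 0" by (rule ppart_nz[OF a1])
  moreover have "ppart n B \<noteq> 1"
  proof
    assume "ppart n B = 1"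
    then have "prime_factors (ppart n B) = {}" by simp
    then show False using ppart_pf[OF a1] a2 by simp
  qed
  ultimately show ?thesis by presburger
qed

lemma ppart_coprime:
  assumes "B \<subseteq> prime_factors n" "C \<subseteq> prime_factors n" "B \<inter> C = {}"
  shows "coprime (ppart n B) (ppart n C)"
  unfolding ppart_def
proof (intro prod_coprime_left prod_coprime_right)
  fix q r assume "q \<in> B" "r \<in> C"
  then have "prime q" "prime r" "q \<noteq> r" using assms by (auto simp: in_prime_factors_iff)
  then show "coprime (q ^ multiplicity q n) (r ^ multiplicity r n)"
    by (simp add: primes_coprime)
qed

lemma ppart_all: "n \<noteq> 0 \<Longrightarrow> ppart n (prime_factors n) = n"
  unfolding ppart_def using prod_prime_factors[of n] by simp


lemma SG_M_coprime_eq: "SG_M_coprime n = smallomega n - 1"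
proof (induction n rule: less_induct)
  case (less n)
  define S where "S = {nim_sum (map SG_M_coprime as) | as. factoring_option pc n as}"
  have SG: "SG_M_coprime n = mex S" unfolding S_def SG_M_coprime_alt by (rule SG_fact_eq)
  have mapeq: "map SG_M_coprime as = map (\<lambda>a. smallomega a - 1) as" if "factoring_option pc n as" for as
    using less factoring_option_less[OF that] by auto
  have up: "\<forall>v\<in>S. v < smallomega n - 1"
  proof
    fix v assume "v \<in> S"
    then obtain as where opt: "factoring_option pc n as" and v: "v = nim_sum (map SG_M_coprime as)"
      unfolding S_def by blast
    from opt have len: "length as \<ge> 2" and gt: "\<forall>a\<in>set as. a > 1" and pr: "prod_list as = n"
      and pcas: "pc as"
      unfolding factoring_option_def by auto
    have pos: "\<forall>a\<in>set as. smallomega a \<ge> 1" using gt smallomega_pos by blast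
    have "0 \<notin> set as" using gt by auto
    then have "smallomega n = sum_list (map smallomega as)"
      using pr smallomega_prod_list[OF pcas] by simp
    also have "\<dots> = sum_list (map (\<lambda>a. smallomega a - 1) as) + length as"
      using sum_minus_one[OF pos] by simp
    finally have eq: "smallomega n = sum_list (map (\<lambda>a. smallomega a - 1) as) + length as" .
    have "v \<le> sum_list (map (\<lambda>a. smallomega a - 1) as)"
      using v mapeq[OF opt] nim_sum_le by metis
    then show "v < smallomega n - 1" using eq len by linarith
  qed
  have low: "\<forall>t < smallomega n - 1. t \<in> S"
  proof (intro allI impI)
    fix t assume t: "t < smallomega n - 1"
    have "n \<noteq> 0" by (rule ccontr) (use t in \<open>simp add: smallomega_def\<close>)
    define P where "P = prime_factors n"
    have finP: "finite P" unfolding P_def by simp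
    define qs where "qs = sorted_list_of_set P"
    have dqs: "distinct qs" and sqs: "set qs = P" and lqs: "length qs = smallomega n"
      unfolding qs_def using finP by (simp_all add: smallomega_def P_def)
    define B0 where "B0 = set (take (t+1) qs)"
    define rs where "rs = drop (t+1) qs"
    define L where "L = ppart n B0 # map (\<lambda>q. ppart n {q}) rs"
    define as where "as = sort L"
    have ma: "mset as = mset L" unfolding as_def by simp
    have sa: "set as = set L" unfolding as_def by (rule set_sort)
    have lenrs: "length rs \<ge> 1" using t lqs unfolding rs_def by simp
    have B0P: "B0 \<subseteq> P" unfolding B0_def using sqs by (auto dest: in_set_takeD)
    have rsP: "set rs \<subseteq> P" unfolding rs_def using sqs by (auto dest: in_set_dropD)
    have cB0: "card B0 = t + 1" unfolding B0_def using dqs t lqs by (simp add: distinct_card)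
    have B0ne: "B0 \<noteq> {}" using cB0 by auto
    have disj: "B0 \<inter> set rs = {}" unfolding B0_def rs_def using dqs
      by (simp add: set_take_disj_set_drop_if_distinct)
    have drs: "distinct rs" unfolding rs_def using dqs by simp
    have gtr: "ppart n {r} > 1" if "r \<in> set rs" for r
      using ppart_gt1[of "{r}" n] that rsP unfolding P_def by blast
    have gtL: "\<forall>x\<in>set L. x > 1"
      unfolding L_def using ppart_gt1[OF B0P[unfolded P_def] B0ne] gtr by auto
    have pcL: "pc L" unfolding L_def pc_Cons
    proof (intro conjI)
      show "\<forall>y\<in>set (map (\<lambda>q. ppart n {q}) rs). coprime (ppart n B0) y"
        using disj B0P rsP unfolding P_def by (auto intro!: ppart_coprime)
      show "pc (map (\<lambda>q. ppart n {q}) rs)"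
        using drs rsP unfolding P_def by (intro pc_map) (auto intro!: ppart_coprime)
    qed
    have pcas: "pc as"
    proof -
      have "distinct L \<and> (\<forall>x\<in>set L. \<forall>y\<in>set L. x \<noteq> y \<longrightarrow> coprime x y)"
        using pc_iff[OF gtL] pcL by blast
      moreover have "distinct as = distinct L" using ma by (rule mset_eq_imp_distinct_iff)
      ultimately show ?thesis using pc_iff[of as] gtL sa by simp
    qed
    have prodL: "prod_list L = n"
    proof -
      have "prod_list (map (\<lambda>q. ppart n {q}) rs) = (\<Prod>q\<in>set rs. ppart n {q})"
        using drs by (simp add: prod.distinct_set_conv_list)
      also have "\<dots> = ppart n (set rs)" unfolding ppart_def by simp
      finally have "prod_list L = ppart n B0 * ppart n (set rs)" unfolding L_def by simp
      also have "\<dots> = ppart n (B0 \<union> set rs)" unfolding ppart_def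
        by (rule prod.union_disjoint[symmetric]) (use disj in \<open>simp_all add: B0_def\<close>)
      also have "B0 \<union> set rs = P" unfolding B0_def rs_def
        by (metis set_append append_take_drop_id sqs)
      finally show ?thesis using ppart_all[OF \<open>n \<noteq> 0\<close>] unfolding P_def by simp
    qed
    have opt: "factoring_option pc n as"
      unfolding factoring_option_def
    proof (intro conjI)
      show "length as \<ge> 2" using lenrs unfolding as_def L_def by simp
      show "sorted as" unfolding as_def by (rule sorted_sort)
      show "\<forall>x\<in>set as. 1 < x" using gtL unfolding sa by blast
      have "prod_list as = prod_list L" using ma by (metis prod_mset_prod_list)
      then show "prod_list as = n" using prodL by simp
      show "pc as" by (rule pcas)
    qed
    have "nim_sum (map SG_M_coprime as) = nim_sum (map SG_M_coprime L)"
      by (rule nim_sum_mset) (simp add: ma)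
    also have "\<dots> = Bit_Operations.xor (SG_M_coprime (ppart n B0))
        (nim_sum (map SG_M_coprime (map (\<lambda>q. ppart n {q}) rs)))" unfolding L_def by simp
    also have "SG_M_coprime (ppart n B0) = t"
      using less[of "ppart n B0"] factoring_option_less[OF opt, of "ppart n B0"]
        smallomega_ppart[OF B0P[unfolded P_def]] cB0 unfolding sa L_def by simp
    also have "nim_sum (map SG_M_coprime (map (\<lambda>q. ppart n {q}) rs)) = 0"
    proof (rule nim_sum_zeros)
      show "\<forall>x\<in>set (map SG_M_coprime (map (\<lambda>q. ppart n {q}) rs)). x = 0"
      proof
        fix x assume "x \<in> set (map SG_M_coprime (map (\<lambda>q. ppart n {q}) rs))"
        then obtain r where r: "r \<in> set rs" "x = SG_M_coprime (ppart n {r})" by auto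
        have rP: "{r} \<subseteq> prime_factors n" using r rsP unfolding P_def by auto
        have "ppart n {r} < n" using factoring_option_less[OF opt, of "ppart n {r}"] r
          unfolding sa L_def by simp
        then show "x = 0" using less[of "ppart n {r}"] r smallomega_ppart[OF rP] by simp
      qed
    qed
    finally have "nim_sum (map SG_M_coprime as) = t" by simp
    then show "t \<in> S" unfolding S_def using opt by blast
  qed
  show ?case unfolding SG by (rule mex_eqI[OF up low])
qed

theorem mainTheorem13:
  fixes n :: nat
  assumes "n \<ge> 2"
  shows "SG_M n = bigOmega n - 1 \<and> SG_M_coprime n = smallomega n - 1"
  using SG_M_eq SG_M_coprime_eq by blast

end
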